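(* Let $p_0\in P_N$, $m\ge1$, $\beta\ge0$, and let $\Lambda_m$ be the set of irreducible $\nu\in\Sigma_{P_N}$ with $p_0\in\mathrm{supp}\,\nu$ and $|\mathrm{supp}\,\nu|=2m$. Then $\sum_{\nu\in\Lambda_m}\varphi_\beta(\nu)\le5^{m-1}\alpha_0(\beta)^m$.
   Context: $G=\mathbb Z_n$, $\rho$ faithful unitary one-dimensional. On $\mathbb Z^4$: $P_N$ is the set of oriented plaquettes (each with its opposite $-p$) with vertices in $B_N=[-N,N]^4\cap\mathbb Z^4$. A 2-form is $\nu:P_N\to G$ with $\nu_{-p}=-\nu_p$; $\Sigma_{P_N}$ is the set of closed 2-forms, i.e. $\sum_{p\in\partial c}\nu_p=0$ for every oriented 3-cell $c$ in $B_N$ (with $\partial c$ its six oriented boundary plaquettes); equivalently $\nu=d\sigma$ for some $G$-valued 1-form $\sigma$. $\varphi_r(g)=e^{r(\mathrm{Re}\rho(g)-1)}$, $\varphi_\beta(\nu)=\prod_{p\in P_N}\varphi_\beta(\nu_p)$, $\alpha_0(r)=\sum_{g\ne0}\varphi_r(g)^2$. $\nu$ is irreducible if there is no non-trivial $\nu'\in\Sigma_{P_N}$, $\nu'\neq\nu$, with $\nu'=\nu|_{\mathrm{supp}\,\nu'}$. *)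

theory Defs
  imports "HOL-Analysis.Analysis"
begin

type_synonym vert = "int ^ 4"

text \<open>An oriented plaquette is (x, i, j) with i \<noteq> j: the unit square with corners
  x, x+e_i, x+e_j, x+e_i+e_j, oriented from direction i to direction j.\<close>
type_synonym plaq = "vert \<times> 4 \<times> 4"

definition unitv :: "4 \<Rightarrow> vert" where
  "unitv i = (\<chi> k. if k = i then 1 else 0)"

definition box :: "nat \<Rightarrow> vert set" where
  "box N = {x. \<forall>k. - int N \<le> x $ k \<and> x $ k \<le> int N}"

definition plaquettes :: "nat \<Rightarrow> plaq set" where
  "plaquettes N = {(x, i, j). i \<noteq> j \<and>
      (\<forall>S \<subseteq> {i, j}. x + (\<Sum>l\<in>S. unitv l) \<in> box N)}"

definition opp :: "plaq \<Rightarrow> plaq" where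
  "opp p = (case p of (x, i, j) \<Rightarrow> (x, j, i))"

text \<open>G = Z_n, elements represented by {0..<n}. A G-valued 2-form on P_N:
  values in G on P_N, 0 (irrelevant) outside, and \<nu>(-p) = -\<nu>(p).\<close>
definition two_form :: "nat \<Rightarrow> nat \<Rightarrow> (plaq \<Rightarrow> int) \<Rightarrow> bool" where
  "two_form n N \<nu> \<longleftrightarrow>
     (\<forall>p \<in> plaquettes N. \<nu> p \<in> {0..<int n} \<and> \<nu> (opp p) = (- \<nu> p) mod int n) \<and>
     (\<forall>p. p \<notin> plaquettes N \<longrightarrow> \<nu> p = 0)"

text \<open>Oriented 3-cells (x,i,j,k), distinct directions, all 8 corners in B_N.
  The six oriented boundary plaquettes are
  [x+e_i;j,k], -[x;j,k], -[x+e_j;i,k], [x;i,k], [x+e_k;i,j], -[x;i,j].\<close>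
definition cube_in_box :: "nat \<Rightarrow> vert \<Rightarrow> 4 \<Rightarrow> 4 \<Rightarrow> 4 \<Rightarrow> bool" where
  "cube_in_box N x i j k \<longleftrightarrow> i \<noteq> j \<and> i \<noteq> k \<and> j \<noteq> k \<and>
      (\<forall>S \<subseteq> {i, j, k}. x + (\<Sum>l\<in>S. unitv l) \<in> box N)"

definition cube_boundary :: "vert \<Rightarrow> 4 \<Rightarrow> 4 \<Rightarrow> 4 \<Rightarrow> plaq list" where
  "cube_boundary x i j k =
     [(x + unitv i, j, k), (x, k, j), (x + unitv j, k, i), (x, i, k),
      (x + unitv k, i, j), (x, j, i)]"

definition closed_forms :: "nat \<Rightarrow> nat \<Rightarrow> (plaq \<Rightarrow> int) set" where
  "closed_forms n N = {\<nu>. two_form n N \<nu> \<and>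
      (\<forall>x i j k. cube_in_box N x i j k \<longrightarrow>
          (\<Sum>p\<leftarrow>cube_boundary x i j k. \<nu> p) mod int n = 0)}"

definition supp :: "(plaq \<Rightarrow> int) \<Rightarrow> plaq set" where
  "supp \<nu> = {p. \<nu> p \<noteq> 0}"

definition irreducible_form :: "nat \<Rightarrow> nat \<Rightarrow> (plaq \<Rightarrow> int) \<Rightarrow> bool" where
  "irreducible_form n N \<nu> \<longleftrightarrow>
     \<not> (\<exists>\<nu>' \<in> closed_forms n N. \<nu>' \<noteq> (\<lambda>_. 0) \<and> \<nu>' \<noteq> \<nu> \<and>
            (\<forall>p \<in> supp \<nu>'. \<nu>' p = \<nu> p))"

text \<open>Faithful unitary one-dimensional representation of Z_n, given as a
  homomorphism Z \<rightarrow> C whose kernel is exactly nZ.\<close>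
definition faithful_rep :: "nat \<Rightarrow> (int \<Rightarrow> complex) \<Rightarrow> bool" where
  "faithful_rep n \<rho> \<longleftrightarrow> (\<forall>a b. \<rho> (a + b) = \<rho> a * \<rho> b) \<and> (\<forall>a. cmod (\<rho> a) = 1) \<and>
     (\<forall>a. \<rho> a = 1 \<longleftrightarrow> int n dvd a)"

definition phi :: "(int \<Rightarrow> complex) \<Rightarrow> real \<Rightarrow> int \<Rightarrow> real" where
  "phi \<rho> r g = exp (r * (Re (\<rho> g) - 1))"

definition phi_form :: "(int \<Rightarrow> complex) \<Rightarrow> nat \<Rightarrow> real \<Rightarrow> (plaq \<Rightarrow> int) \<Rightarrow> real" where
  "phi_form \<rho> N \<beta> \<nu> = (\<Prod>p \<in> plaquettes N. phi \<rho> \<beta> (\<nu> p))"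

definition alpha0 :: "nat \<Rightarrow> (int \<Rightarrow> complex) \<Rightarrow> real \<Rightarrow> real" where
  "alpha0 n \<rho> r = (\<Sum>g \<in> {1..<int n}. (phi \<rho> r g)^2)"

definition Lambda :: "nat \<Rightarrow> nat \<Rightarrow> plaq \<Rightarrow> nat \<Rightarrow> (plaq \<Rightarrow> int) set" where
  "Lambda n N p0 m = {\<nu> \<in> closed_forms n N. irreducible_form n N \<nu> \<and>
      p0 \<in> supp \<nu> \<and> card (supp \<nu>) = 2 * m}"

end

theory Submission
  imports Defs
begin

lemma finite_box: "finite (box N)"
proof -
  have "box N \<subseteq> vec_lambda ` (PiE UNIV (\<lambda>_. {- int N..int N}))"
  proof
    fix x assume "x \<in> box N"
    hence "(\<lambda>k. x $ k) \<in> PiE UNIV (\<lambda>_. {- int N..int N})" by (auto simp: box_def)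
    moreover have "x = vec_lambda (\<lambda>k. x $ k)" by simp
    ultimately show "x \<in> vec_lambda ` (PiE UNIV (\<lambda>_. {- int N..int N}))" by blast
  qed
  moreover have "finite (PiE (UNIV::4 set) (\<lambda>_. {- int N..int N}))" by (rule finite_PiE) auto
  ultimately show ?thesis using finite_surj by blast
qed

lemma finite_plaq: "finite (plaquettes N)"
proof -
  have "plaquettes N \<subseteq> box N \<times> UNIV \<times> UNIV"
  proof
    fix p assume "p \<in> plaquettes N"
    then obtain x i j where p: "p = (x,i,j)" and "\<forall>S \<subseteq> {i, j}. x + (\<Sum>l\<in>S. unitv l) \<in> box N"
      unfolding plaquettes_def by blast
    hence "x + (\<Sum>l\<in>{}. unitv l) \<in> box N" by blast
    thus "p \<in> box N \<times> UNIV \<times> UNIV" using p by simp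
  qed
  moreover have "finite (box N \<times> (UNIV::4 set) \<times> (UNIV::4 set))" using finite_box by simp
  ultimately show ?thesis by (rule finite_subset)
qed

lemma mem_plaq: "(x,i,j) \<in> plaquettes N \<longleftrightarrow> i \<noteq> j \<and> (\<forall>S\<subseteq>{i,j}. x + (\<Sum>l\<in>S. unitv l) \<in> box N)"
  unfolding plaquettes_def by (simp only: mem_Collect_eq prod.case)

lemma opp_plaq: "q \<in> plaquettes N \<Longrightarrow> opp q \<in> plaquettes N \<and> opp q \<noteq> q"
proof -
  assume qp: "q \<in> plaquettes N"
  obtain x i j where q: "q = (x,i,j)" by (cases q) auto
  from qp have ij: "i \<noteq> j" and a: "\<forall>S \<subseteq> {i, j}. x + (\<Sum>l\<in>S. unitv l) \<in> box N"
    unfolding q mem_plaq by auto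
  have e: "{j,i} = {i,j}" by blast
  have "\<forall>S \<subseteq> {j, i}. x + (\<Sum>l\<in>S. unitv l) \<in> box N" unfolding e by (rule a)
  hence "(x,j,i) \<in> plaquettes N" using ij unfolding mem_plaq by simp
  moreover have "opp q = (x,j,i)" by (simp add: q opp_def)
  ultimately have "opp q \<in> plaquettes N" by simp
  moreover have "opp q \<noteq> q" using ij unfolding q opp_def by simp
  ultimately show ?thesis by blast
qed

lemma opp_opp[simp]: "opp (opp q) = q"
  by (cases q) (simp add: opp_def)

lemma opp_inj: "opp p = opp q \<Longrightarrow> p = q"
proof -
  assume "opp p = opp q"
  hence "opp (opp p) = opp (opp q)" by simp
  thus "p = q" by simp
qed

lemma supp_sub: "two_form n N \<nu> \<Longrightarrow> supp \<nu> \<subseteq> plaquettes N"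
  unfolding two_form_def supp_def by blast

lemma finite_supp: "two_form n N \<nu> \<Longrightarrow> finite (supp \<nu>)"
  by (rule finite_subset[OF supp_sub finite_plaq])

lemma finite_closed: "finite (closed_forms n N)"
proof -
  have "closed_forms n N \<subseteq> {f. \<forall>x. (x \<in> plaquettes N \<longrightarrow> f x \<in> {0..<int n}) \<and> (x \<notin> plaquettes N \<longrightarrow> f x = 0)}"
    unfolding closed_forms_def two_form_def by auto
  moreover have "finite {f. \<forall>x. (x \<in> plaquettes N \<longrightarrow> f x \<in> {0..<int n}) \<and> (x \<notin> plaquettes N \<longrightarrow> f x = (0::int))}"
    by (rule finite_set_of_finite_funs) (simp_all add: finite_plaq)
  ultimately show ?thesis by (rule finite_subset)
qed

lemma phi_pos: "phi \<rho> \<beta> g > 0"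
  unfolding phi_def by simp

lemma alpha0_nonneg: "alpha0 n \<rho> \<beta> \<ge> 0"
  unfolding alpha0_def by (rule sum_nonneg) simp

lemma rho0: "faithful_rep n \<rho> \<Longrightarrow> \<rho> 0 = 1"
  unfolding faithful_rep_def by simp

lemma phi0: assumes "faithful_rep n \<rho>" shows "phi \<rho> \<beta> 0 = 1"
  unfolding phi_def using rho0[OF assms] by simp

lemma phi_opp:
  assumes fr: "faithful_rep n \<rho>"
  shows "phi \<rho> \<beta> ((- g) mod int n) = phi \<rho> \<beta> g"
proof -
  have hom: "\<And>a b. \<rho> (a + b) = \<rho> a * \<rho> b" and nm: "\<And>a. cmod (\<rho> a) = 1"
    and ker: "\<And>a. \<rho> a = 1 \<longleftrightarrow> int n dvd a" using fr unfolding faithful_rep_def by auto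
  have "\<rho> (- g) = \<rho> ((- g) div int n * int n + (- g) mod int n)" by simp
  also have "\<dots> = \<rho> ((- g) div int n * int n) * \<rho> ((- g) mod int n)" by (rule hom)
  also have "\<rho> ((- g) div int n * int n) = 1" using ker by simp
  finally have e1: "\<rho> ((- g) mod int n) = \<rho> (- g)" by simp
  have "\<rho> (- g) * \<rho> g = 1" using hom[of "-g" g] ker[of 0] by simp
  moreover have "cnj (\<rho> g) * \<rho> g = 1"
    using complex_norm_square[of "\<rho> g"] nm[of g] by (simp add: mult.commute)
  moreover have "\<rho> g \<noteq> 0" using nm[of g] by auto
  ultimately have "\<rho> (- g) = cnj (\<rho> g)" by (metis mult_cancel_right)
  thus ?thesis unfolding phi_def using e1 by simp
qed


definition Xs :: "nat \<Rightarrow> nat \<Rightarrow> (plaq \<Rightarrow> int) \<Rightarrow> nat \<Rightarrow> (plaq \<Rightarrow> int) set" where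
  "Xs n N f k = {\<nu> \<in> closed_forms n N. irreducible_form n N \<nu> \<and> (\<forall>p\<in>supp f. \<nu> p = f p)
      \<and> card (supp \<nu>) = card (supp f) + 2 * k}"

definition wt :: "(int \<Rightarrow> complex) \<Rightarrow> real \<Rightarrow> (plaq \<Rightarrow> int) \<Rightarrow> (plaq \<Rightarrow> int) \<Rightarrow> real" where
  "wt \<rho> \<beta> f \<nu> = (\<Prod>p \<in> supp \<nu> - supp f. phi \<rho> \<beta> (\<nu> p))"

definition ext :: "nat \<Rightarrow> (plaq \<Rightarrow> int) \<Rightarrow> plaq \<Rightarrow> int \<Rightarrow> (plaq \<Rightarrow> int)" where
  "ext n f q g = f(q := g, opp q := (- g) mod int n)"

lemma wt_nonneg: "wt \<rho> \<beta> f \<nu> \<ge> 0"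
  unfolding wt_def by (rule prod_nonneg) (simp add: phi_def)

lemma finite_Xs: "finite (Xs n N f k)"
  by (rule finite_subset[OF _ finite_closed[of n N]]) (auto simp: Xs_def)

lemma sum_cover:
  fixes w :: "'a \<Rightarrow> real" and c :: "'i \<Rightarrow> real" and h :: "'i \<Rightarrow> 'a \<Rightarrow> real"
  assumes fX: "finite X" and fI: "finite I" and fY: "\<And>i. i\<in>I \<Longrightarrow> finite (Y i)"
    and cov: "\<And>\<nu>. \<nu>\<in>X \<Longrightarrow> \<exists>i\<in>I. \<nu> \<in> Y i \<and> w \<nu> = c i * h i \<nu>"
    and c0: "\<And>i. i\<in>I \<Longrightarrow> c i \<ge> 0" and h0: "\<And>i \<nu>. i\<in>I \<Longrightarrow> \<nu> \<in> Y i \<Longrightarrow> h i \<nu> \<ge> 0"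
  shows "sum w X \<le> (\<Sum>i\<in>I. c i * sum (h i) (Y i))"
proof -
  define t where "t = (\<lambda>\<nu> i. if \<nu> \<in> Y i then c i * h i \<nu> else 0)"
  have t0: "\<And>\<nu> i. i \<in> I \<Longrightarrow> t \<nu> i \<ge> 0" using c0 h0 by (auto simp: t_def)
  have "sum w X \<le> (\<Sum>\<nu>\<in>X. \<Sum>i\<in>I. t \<nu> i)"
  proof (rule sum_mono)
    fix \<nu> assume "\<nu> \<in> X"
    then obtain i where i: "i\<in>I" "\<nu> \<in> Y i" "w \<nu> = c i * h i \<nu>" using cov by blast
    hence "w \<nu> = t \<nu> i" by (simp add: t_def)
    also have "\<dots> \<le> (\<Sum>i\<in>I. t \<nu> i)" by (rule member_le_sum) (use t0 i fI in auto)
    finally show "w \<nu> \<le> (\<Sum>i\<in>I. t \<nu> i)" .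
  qed
  also have "\<dots> = (\<Sum>i\<in>I. \<Sum>\<nu>\<in>X. t \<nu> i)" by (rule sum.swap)
  also have "\<dots> \<le> (\<Sum>i\<in>I. c i * sum (h i) (Y i))"
  proof (rule sum_mono)
    fix i assume i: "i \<in> I"
    have "(\<Sum>\<nu>\<in>X. t \<nu> i) = (\<Sum>\<nu>\<in>X \<inter> Y i. c i * h i \<nu>)"
      unfolding t_def by (rule sum.inter_restrict[OF fX, symmetric])
    also have "\<dots> \<le> (\<Sum>\<nu>\<in>Y i. c i * h i \<nu>)"
      by (rule sum_mono2) (use fY i c0 h0 in auto)
    also have "\<dots> = c i * sum (h i) (Y i)" by (simp add: sum_distrib_left)
    finally show "(\<Sum>\<nu>\<in>X. t \<nu> i) \<le> c i * sum (h i) (Y i)" .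
  qed
  finally show ?thesis .
qed

lemma tf_opp0: "two_form n N f \<Longrightarrow> q \<in> plaquettes N \<Longrightarrow> f q = 0 \<Longrightarrow> f (opp q) = 0"
  unfolding two_form_def by auto

lemma negmod_nz:
  assumes "g \<in> {1..<int n}" shows "(- g) mod int n \<noteq> 0" "(- g) mod int n \<in> {0..<int n}"
proof -
  have "\<not> int n dvd g" using assms zdvd_imp_le by fastforce
  hence "\<not> int n dvd (- g)" by simp
  thus "(- g) mod int n \<noteq> 0" by (simp add: dvd_eq_mod_eq_0)
  show "(- g) mod int n \<in> {0..<int n}" using assms by auto
qed

lemma ext_props:
  assumes tf: "two_form n N f" and qp: "q \<in> plaquettes N" and f0: "f q = 0" and g: "g \<in> {1..<int n}"
  shows "two_form n N (ext n f q g)" "ext n f q g \<noteq> (\<lambda>_. 0)"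
    "supp (ext n f q g) = insert q (insert (opp q) (supp f))" "q \<notin> supp f" "opp q \<notin> supp f"
    "opp q \<noteq> q"
proof -
  have oq: "opp q \<in> plaquettes N" "opp q \<noteq> q" using opp_plaq[OF qp] by auto
  have f1: "f (opp q) = 0" using tf_opp0[OF tf qp f0] .
  have nz: "(- g) mod int n \<noteq> 0" "(- g) mod int n \<in> {0..<int n}" using negmod_nz[OF g] by auto
  have eq: "ext n f q g q = g" "ext n f q g (opp q) = (- g) mod int n"
    "\<And>p. p \<noteq> q \<Longrightarrow> p \<noteq> opp q \<Longrightarrow> ext n f q g p = f p"
    using oq by (auto simp: ext_def)
  show "opp q \<noteq> q" by (rule oq(2))
  show "q \<notin> supp f" "opp q \<notin> supp f" using f0 f1 by (auto simp: supp_def)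
  show "ext n f q g \<noteq> (\<lambda>_. 0)"
  proof
    assume "ext n f q g = (\<lambda>_. 0)"
    hence "ext n f q g q = 0" by simp
    with eq(1) g show False by simp
  qed
  show "supp (ext n f q g) = insert q (insert (opp q) (supp f))"
  proof (rule set_eqI)
    fix p
    show "p \<in> supp (ext n f q g) \<longleftrightarrow> p \<in> insert q (insert (opp q) (supp f))"
      using eq nz g f0 f1 by (cases "p = q"; cases "p = opp q") (auto simp: supp_def)
  qed
  have gm: "g = (- ((- g) mod int n)) mod int n"
  proof -
    have "(- ((- g) mod int n)) mod int n = (- (- g)) mod int n" by (rule mod_minus_eq)
    also have "\<dots> = g" using g by simp
    finally show ?thesis by simp
  qed
  show "two_form n N (ext n f q g)"
    unfolding two_form_def
  proof (intro conjI ballI allI impI)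
    fix p assume pp: "p \<in> plaquettes N"
    show "ext n f q g p \<in> {0..<int n}"
      using tf pp eq nz g by (cases "p = q"; cases "p = opp q") (auto simp: two_form_def)
    show "ext n f q g (opp p) = - ext n f q g p mod int n"
    proof (cases "p = q")
      case True thus ?thesis using eq by simp
    next
      case False
      show ?thesis
      proof (cases "p = opp q")
        case True thus ?thesis using eq gm oq by simp
      next
        case False2: False
        have "opp p \<noteq> q" using False2 by auto
        moreover have "opp p \<noteq> opp q" using False opp_inj by blast
        ultimately show ?thesis using eq False False2 tf pp by (simp add: two_form_def)
      qed
    qed
  next
    fix p assume "p \<notin> plaquettes N"
    hence "p \<noteq> q" "p \<noteq> opp q" using qp oq by auto
    moreover have "f p = 0" using tf \<open>p \<notin> plaquettes N\<close> unfolding two_form_def by blast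
    ultimately show "ext n f q g p = 0" using eq(3) by simp
  qed
qed

lemma step_nu:
  assumes fr: "faithful_rep n \<rho>" and tf: "two_form n N f" and tn: "two_form n N \<nu>"
    and ag: "\<forall>p\<in>supp f. \<nu> p = f p" and qp: "q \<in> plaquettes N" and f0: "f q = 0" and nq: "\<nu> q \<noteq> 0"
  shows "\<nu> q \<in> {1..<int n}" "\<forall>p\<in>supp (ext n f q (\<nu> q)). \<nu> p = ext n f q (\<nu> q) p"
    "card (supp (ext n f q (\<nu> q))) = card (supp f) + 2"
    "wt \<rho> \<beta> f \<nu> = (phi \<rho> \<beta> (\<nu> q))^2 * wt \<rho> \<beta> (ext n f q (\<nu> q)) \<nu>"
proof -
  define g where "g = \<nu> q"
  have r: "\<nu> q \<in> {0..<int n}" "\<nu> (opp q) = (- \<nu> q) mod int n" using tn qp unfolding two_form_def by auto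
  show gG: "\<nu> q \<in> {1..<int n}" using r nq by auto
  note E = ext_props[OF tf qp f0 gG]
  have fs: "finite (supp f)" using finite_supp[OF tf] .
  show "card (supp (ext n f q (\<nu> q))) = card (supp f) + 2"
    unfolding E(3) using E(4,5,6) fs by simp
  show ag2: "\<forall>p\<in>supp (ext n f q (\<nu> q)). \<nu> p = ext n f q (\<nu> q) p"
  proof
    fix p assume "p \<in> supp (ext n f q (\<nu> q))"
    hence "p = q \<or> p = opp q \<or> p \<in> supp f" unfolding E(3) by auto
    moreover have "ext n f q (\<nu> q) q = \<nu> q" "ext n f q (\<nu> q) (opp q) = \<nu> (opp q)"
      using E(6) r by (auto simp: ext_def)
    moreover have "p \<in> supp f \<Longrightarrow> ext n f q (\<nu> q) p = f p" using E(4,5) by (auto simp: ext_def)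
    ultimately show "\<nu> p = ext n f q (\<nu> q) p" using ag by auto
  qed
  have fn: "finite (supp \<nu>)" using finite_supp[OF tn] .
  have qs: "q \<in> supp \<nu>" using nq by (simp add: supp_def)
  have oqs: "opp q \<in> supp \<nu>" using r(2) negmod_nz[OF gG] by (simp add: supp_def)
  have dec: "supp \<nu> - supp f = insert q (insert (opp q) (supp \<nu> - supp (ext n f q (\<nu> q))))"
    using qs oqs E(3,4,5) by auto
  have "wt \<rho> \<beta> f \<nu> = phi \<rho> \<beta> (\<nu> q) * (phi \<rho> \<beta> (\<nu> (opp q)) * wt \<rho> \<beta> (ext n f q (\<nu> q)) \<nu>)"
    unfolding wt_def dec using fn E(3,6) by simp
  also have "phi \<rho> \<beta> (\<nu> (opp q)) = phi \<rho> \<beta> (\<nu> q)" unfolding r(2) by (rule phi_opp[OF fr])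
  finally show "wt \<rho> \<beta> f \<nu> = (phi \<rho> \<beta> (\<nu> q))^2 * wt \<rho> \<beta> (ext n f q (\<nu> q)) \<nu>"
    by (simp add: power2_eq_square)
qed


lemma sum_QG:
  assumes "finite Q" "finite G"
  shows "(\<Sum>i\<in>Q\<times>G. F (snd i)) = real (card Q) * sum F G"
proof -
  have "(\<Sum>i\<in>Q\<times>G. F (snd i)) = (\<Sum>(q,g)\<in>Q\<times>G. F g)"
    by (rule sum.cong) auto
  also have "\<dots> = (\<Sum>q\<in>Q. \<Sum>g\<in>G. F g)"
    by (rule sum.cartesian_product[symmetric])
  finally have "(\<Sum>i\<in>Q\<times>G. F (snd i)) = (\<Sum>q\<in>Q. \<Sum>g\<in>G. F g)" .
  thus ?thesis by simp
qed

lemma main_ind: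
  assumes n1: "n \<ge> 1" and fr: "faithful_rep n \<rho>"
  shows "two_form n N f \<Longrightarrow> f \<noteq> (\<lambda>_. 0) \<Longrightarrow>
    sum (wt \<rho> \<beta> f) (Xs n N f k) \<le> (5 * alpha0 n \<rho> \<beta>) ^ k"
proof (induction k arbitrary: f)
  case 0
  have "Xs n N f 0 \<subseteq> {f}"
  proof
    fix \<nu> assume "\<nu> \<in> Xs n N f 0"
    hence cl: "\<nu> \<in> closed_forms n N" and ag: "\<forall>p\<in>supp f. \<nu> p = f p"
      and cd: "card (supp \<nu>) = card (supp f)" by (auto simp: Xs_def)
    have tf: "two_form n N \<nu>" using cl by (simp add: closed_forms_def)
    have sub: "supp f \<subseteq> supp \<nu>" using ag by (auto simp: supp_def)
    have se: "supp f = supp \<nu>" by (rule card_subset_eq[OF finite_supp[OF tf] sub cd[symmetric]])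
    have "\<nu> = f"
    proof
      fix p show "\<nu> p = f p"
      proof (cases "p \<in> supp f")
        case True thus ?thesis using ag by blast
      next
        case False
        hence "p \<notin> supp \<nu>" using se by simp
        thus ?thesis using False by (simp add: supp_def)
      qed
    qed
    thus "\<nu> \<in> {f}" by simp
  qed
  hence "sum (wt \<rho> \<beta> f) (Xs n N f 0) \<le> sum (wt \<rho> \<beta> f) {f}"
    by (rule sum_mono2[rotated]) (auto simp: wt_nonneg)
  also have "\<dots> = 1" by (simp add: wt_def)
  finally show ?case by simp
next
  case (Suc k)
  have tf: "two_form n N f" and nz: "f \<noteq> (\<lambda>_. 0)" by fact+
  have a0: "alpha0 n \<rho> \<beta> \<ge> 0" by (rule alpha0_nonneg)
  show ?case
  proof (cases "Xs n N f (Suc k) = {}")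
    case True thus ?thesis using a0 by simp
  next
    case False
    then obtain \<nu>0 where \<nu>0: "\<nu>0 \<in> Xs n N f (Suc k)" by blast
    have fnc: "f \<notin> closed_forms n N"
    proof
      assume fc: "f \<in> closed_forms n N"
      from \<nu>0 have irr: "irreducible_form n N \<nu>0" and ag: "\<forall>p\<in>supp f. \<nu>0 p = f p"
        and cd: "card (supp \<nu>0) = card (supp f) + 2 * Suc k" by (auto simp: Xs_def)
      have "f \<noteq> \<nu>0" using cd by auto
      with irr fc nz ag show False unfolding irreducible_form_def by auto
    qed
    then obtain x i j l where cb: "cube_in_box N x i j l"
      and sn: "(\<Sum>p\<leftarrow>cube_boundary x i j l. f p) mod int n \<noteq> 0"
      using tf by (auto simp: closed_forms_def)
    define L where "L = cube_boundary x i j l"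
    define Q where "Q = {q \<in> set L. f q = 0 \<and> q \<in> plaquettes N}"
    define G where "G = {1..<int n}"
    have fQ: "finite Q" unfolding Q_def by simp
    have fG: "finite G" unfolding G_def by simp
    have "\<exists>q1\<in>set L. f q1 \<noteq> 0"
    proof (rule ccontr)
      assume "\<not> (\<exists>q1\<in>set L. f q1 \<noteq> 0)"
      hence "(\<Sum>p\<leftarrow>L. f p) = (\<Sum>p\<leftarrow>L. (0::int))" by (intro arg_cong[where f=sum_list] map_cong) auto
      also have "\<dots> = 0" by (induct L) simp_all
      finally have "(\<Sum>p\<leftarrow>L. f p) = 0" .
      thus False using sn unfolding L_def by simp
    qed
    then obtain q1 where q1: "q1 \<in> set L" "f q1 \<noteq> 0" by blast
    have cQ: "card Q \<le> 5"
    proof -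
      have "Q \<subseteq> set L - {q1}" using q1 unfolding Q_def by auto
      hence "card Q \<le> card (set L - {q1})" by (intro card_mono) auto
      also have "\<dots> = card (set L) - 1" using q1 by simp
      also have "card (set L) \<le> 6" using card_length[of L] by (simp add: L_def cube_boundary_def)
      finally show ?thesis by simp
    qed
    have "sum (wt \<rho> \<beta> f) (Xs n N f (Suc k)) \<le>
      (\<Sum>i\<in>Q\<times>G. (phi \<rho> \<beta> (snd i))^2 * sum (wt \<rho> \<beta> (ext n f (fst i) (snd i))) (Xs n N (ext n f (fst i) (snd i)) k))"
    proof (rule sum_cover)
      show "finite (Xs n N f (Suc k))" by (rule finite_Xs)
      show "finite (Q \<times> G)" using fQ fG by simp
    next
      fix \<nu> assume \<nu>: "\<nu> \<in> Xs n N f (Suc k)"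
      hence cl: "\<nu> \<in> closed_forms n N" and irr: "irreducible_form n N \<nu>" and ag: "\<forall>p\<in>supp f. \<nu> p = f p"
        and cd: "card (supp \<nu>) = card (supp f) + 2 * Suc k" by (auto simp: Xs_def)
      have tn: "two_form n N \<nu>" using cl by (simp add: closed_forms_def)
      have s0: "(\<Sum>p\<leftarrow>L. \<nu> p) mod int n = 0" using cl cb unfolding closed_forms_def L_def by blast
      have "\<exists>q\<in>set L. \<nu> q \<noteq> f q"
      proof (rule ccontr)
        assume "\<not> (\<exists>q\<in>set L. \<nu> q \<noteq> f q)"
        hence "(\<Sum>p\<leftarrow>L. \<nu> p) = (\<Sum>p\<leftarrow>L. f p)" by (intro arg_cong[where f=sum_list] map_cong) auto
        thus False using s0 sn unfolding L_def by simp
      qed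
      then obtain q where qL: "q \<in> set L" and qd: "\<nu> q \<noteq> f q" by blast
      have f0: "f q = 0"
      proof (rule ccontr)
        assume "f q \<noteq> 0"
        hence "q \<in> supp f" by (simp add: supp_def)
        with ag have "\<nu> q = f q" by blast
        with qd show False by simp
      qed
      have nq: "\<nu> q \<noteq> 0" using qd f0 by simp
      have qp: "q \<in> plaquettes N" using supp_sub[OF tn] nq by (auto simp: supp_def)
      note S = step_nu[OF fr tf tn ag qp f0 nq]
      have "\<nu> \<in> Xs n N (ext n f q (\<nu> q)) k"
        using cl irr S(2,3) cd unfolding Xs_def by simp
      moreover have "(q, \<nu> q) \<in> Q \<times> G" using qL f0 qp S(1) unfolding Q_def G_def by simp
      ultimately show "\<exists>i\<in>Q \<times> G. \<nu> \<in> Xs n N (ext n f (fst i) (snd i)) k \<and>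
          wt \<rho> \<beta> f \<nu> = (phi \<rho> \<beta> (snd i))^2 * wt \<rho> \<beta> (ext n f (fst i) (snd i)) \<nu>"
        using S(4) by force
    qed (auto simp: finite_Xs wt_nonneg)
    also have "\<dots> \<le> (\<Sum>i\<in>Q\<times>G. (phi \<rho> \<beta> (snd i))^2 * (5 * alpha0 n \<rho> \<beta>) ^ k)"
    proof (rule sum_mono)
      fix i assume i: "i \<in> Q \<times> G"
      hence qp: "fst i \<in> plaquettes N" and f0: "f (fst i) = 0" and gG: "snd i \<in> {1..<int n}"
        unfolding Q_def G_def by auto
      note E = ext_props[OF tf qp f0 gG]
      show "(phi \<rho> \<beta> (snd i))^2 * sum (wt \<rho> \<beta> (ext n f (fst i) (snd i))) (Xs n N (ext n f (fst i) (snd i)) k)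
          \<le> (phi \<rho> \<beta> (snd i))^2 * (5 * alpha0 n \<rho> \<beta>) ^ k"
        by (rule mult_left_mono[OF Suc.IH[OF E(1) E(2)]]) simp
    qed
    also have "\<dots> = real (card Q) * alpha0 n \<rho> \<beta> * (5 * alpha0 n \<rho> \<beta>) ^ k"
      using sum_QG[OF fQ fG, of "\<lambda>g. (phi \<rho> \<beta> g)^2"]
      by (simp add: sum_distrib_right[symmetric] alpha0_def G_def)
    also have "\<dots> \<le> 5 * alpha0 n \<rho> \<beta> * (5 * alpha0 n \<rho> \<beta>) ^ k"
      using cQ a0 by (intro mult_right_mono) auto
    finally show ?thesis by simp
  qed
qed

theorem mainTheorem11:
  fixes n N m :: nat and \<rho> :: "int \<Rightarrow> complex" and \<beta> :: real and p0 :: plaq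
  assumes "n \<ge> 1"
    and "faithful_rep n \<rho>"
    and "p0 \<in> plaquettes N"
    and "m \<ge> 1"
    and "\<beta> \<ge> 0"
  shows "(\<Sum>\<nu> \<in> Lambda n N p0 m. phi_form \<rho> N \<beta> \<nu>) \<le> 5 ^ (m - 1) * (alpha0 n \<rho> \<beta>) ^ m"
proof -
  note n1 = assms(1) and fr = assms(2) and p0 = assms(3) and m1 = assms(4)
  define z :: "plaq \<Rightarrow> int" where "z = (\<lambda>_. 0)"
  define G where "G = {1..<int n}"
  have tz: "two_form n N z" unfolding two_form_def z_def using n1 by auto
  have sz: "supp z = {}" by (simp add: supp_def z_def)
  have a0: "alpha0 n \<rho> \<beta> \<ge> 0" by (rule alpha0_nonneg)
  have fL: "finite (Lambda n N p0 m)"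
    by (rule finite_subset[OF _ finite_closed[of n N]]) (auto simp: Lambda_def)
  have pf: "\<And>\<nu>. \<nu> \<in> Lambda n N p0 m \<Longrightarrow> phi_form \<rho> N \<beta> \<nu> = wt \<rho> \<beta> z \<nu>"
  proof -
    fix \<nu> assume "\<nu> \<in> Lambda n N p0 m"
    hence tn: "two_form n N \<nu>" by (simp add: Lambda_def closed_forms_def)
    have "phi_form \<rho> N \<beta> \<nu> = (\<Prod>p\<in>supp \<nu>. phi \<rho> \<beta> (\<nu> p))"
      unfolding phi_form_def
      by (rule prod.mono_neutral_right[OF finite_plaq supp_sub[OF tn]]) (auto simp: supp_def phi0[OF fr])
    thus "phi_form \<rho> N \<beta> \<nu> = wt \<rho> \<beta> z \<nu>" by (simp add: wt_def sz)
  qed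
  have "(\<Sum>\<nu> \<in> Lambda n N p0 m. phi_form \<rho> N \<beta> \<nu>) = (\<Sum>\<nu> \<in> Lambda n N p0 m. wt \<rho> \<beta> z \<nu>)"
    using pf by (rule sum.cong[OF refl])
  also have "\<dots> \<le> (\<Sum>i\<in>{p0}\<times>G. (phi \<rho> \<beta> (snd i))^2 * sum (wt \<rho> \<beta> (ext n z (fst i) (snd i))) (Xs n N (ext n z (fst i) (snd i)) (m - 1)))"
  proof (rule sum_cover)
    show "finite (Lambda n N p0 m)" by (rule fL)
    show "finite ({p0} \<times> G)" unfolding G_def by simp
  next
    fix \<nu> assume \<nu>: "\<nu> \<in> Lambda n N p0 m"
    hence cl: "\<nu> \<in> closed_forms n N" and irr: "irreducible_form n N \<nu>" and ps: "p0 \<in> supp \<nu>"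
      and cd: "card (supp \<nu>) = 2 * m" by (auto simp: Lambda_def)
    have tn: "two_form n N \<nu>" using cl by (simp add: closed_forms_def)
    have ag: "\<forall>p\<in>supp z. \<nu> p = z p" by (simp add: sz)
    have nq: "\<nu> p0 \<noteq> 0" using ps by (simp add: supp_def)
    have f0: "z p0 = 0" by (simp add: z_def)
    note S = step_nu[OF fr tz tn ag p0 f0 nq]
    have "card (supp \<nu>) = card (supp (ext n z p0 (\<nu> p0))) + 2 * (m - 1)"
      using S(3) cd m1 sz by simp
    hence "\<nu> \<in> Xs n N (ext n z p0 (\<nu> p0)) (m - 1)"
      using cl irr S(2) unfolding Xs_def by simp
    moreover have "(p0, \<nu> p0) \<in> {p0} \<times> G" using S(1) unfolding G_def by simp
    ultimately show "\<exists>i\<in>{p0} \<times> G. \<nu> \<in> Xs n N (ext n z (fst i) (snd i)) (m - 1) \<and>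
          wt \<rho> \<beta> z \<nu> = (phi \<rho> \<beta> (snd i))^2 * wt \<rho> \<beta> (ext n z (fst i) (snd i)) \<nu>"
      using S(4) by force
  qed (auto simp: finite_Xs wt_nonneg)
  also have "\<dots> \<le> (\<Sum>i\<in>{p0}\<times>G. (phi \<rho> \<beta> (snd i))^2 * (5 * alpha0 n \<rho> \<beta>) ^ (m - 1))"
  proof (rule sum_mono)
    fix i assume i: "i \<in> {p0} \<times> G"
    hence qp: "fst i \<in> plaquettes N" and f0: "z (fst i) = 0" and gG: "snd i \<in> {1..<int n}"
      using p0 unfolding G_def z_def by auto
    note E = ext_props[OF tz qp f0 gG]
    show "(phi \<rho> \<beta> (snd i))^2 * sum (wt \<rho> \<beta> (ext n z (fst i) (snd i))) (Xs n N (ext n z (fst i) (snd i)) (m - 1))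
        \<le> (phi \<rho> \<beta> (snd i))^2 * (5 * alpha0 n \<rho> \<beta>) ^ (m - 1)"
      by (rule mult_left_mono[OF main_ind[OF n1 fr E(1) E(2)]]) simp
  qed
  also have "\<dots> = alpha0 n \<rho> \<beta> * (5 * alpha0 n \<rho> \<beta>) ^ (m - 1)"
    using sum_QG[of "{p0}" G "\<lambda>g. (phi \<rho> \<beta> g)^2"]
    by (simp add: sum_distrib_right[symmetric] alpha0_def G_def)
  also have "\<dots> = 5 ^ (m - 1) * (alpha0 n \<rho> \<beta>) ^ m"
  proof -
    have "m = Suc (m - 1)" using m1 by simp
    hence "(alpha0 n \<rho> \<beta>) ^ m = alpha0 n \<rho> \<beta> * (alpha0 n \<rho> \<beta>) ^ (m - 1)" by (metis power_Suc)
    thus ?thesis by (simp add: power_mult_distrib)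
  qed
  finally show ?thesis .
qed

end
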